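(* Consider the partial differential equation, for real functions $\mu_t=\mu(t,x)$ and $\sigma_t=\sigma(t,x)>0$, $$\frac{\partial}{\partial x}\left[\frac{1}{\sigma_t}\frac{\partial\sigma_t}{\partial t}+\sigma_t\frac{\partial}{\partial x}\left(\frac12\frac{\partial\sigma_t}{\partial x}-\frac{\mu_t}{\sigma_t}\right)\right]=0.$$ Let $\tilde\sigma:[0,\infty)\to\mathbb{R}_+$. Then: 1. (L-class) If $\sigma(t,x)=\tilde\sigma(t)$, the general solution for the drift is $\mu(t,x)=\alpha(t)x+\beta(t)$, $x\in\mathbb{R}$, with $\alpha,\beta$ arbitrary real functions. 2. (G-class) If $\sigma(t,x)=\tilde\sigma(t)x$, the general solution for the drift is $\mu(t,x)=\alpha(t)x+\beta(t)x\log x$, $x\in\mathbb{R}_+$, with $\alpha,\beta$ arbitrary real functions. *)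

theory Defs
  imports "HOL-Analysis.Analysis"
begin

definition pdt :: "(real \<Rightarrow> real) \<Rightarrow> real \<Rightarrow> real" where
  "pdt f t = (SOME D. (f has_real_derivative D) (at t within {0..}))"

definition drift_bracket ::
  "(real \<Rightarrow> real \<Rightarrow> real) \<Rightarrow> (real \<Rightarrow> real \<Rightarrow> real) \<Rightarrow> real \<Rightarrow> real \<Rightarrow> real" where
  "drift_bracket \<sigma> \<mu> t y =
     pdt (\<lambda>s. \<sigma> s y) t / \<sigma> t y
     + \<sigma> t y * deriv (\<lambda>z. deriv (\<sigma> t) z / 2 - \<mu> t z / \<sigma> t z) y"

definition drift_pde ::
  "(real \<Rightarrow> real \<Rightarrow> real) \<Rightarrow> (real \<Rightarrow> real \<Rightarrow> real) \<Rightarrow> real \<Rightarrow> real \<Rightarrow> bool" where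
  "drift_pde \<sigma> \<mu> t x \<longleftrightarrow> ((drift_bracket \<sigma> \<mu> t) has_real_derivative 0) (at x)"

end

theory Submission imports Defs begin

lemma at_nonneg_nontriv: "(t::real) \<ge> 0 \<Longrightarrow> at t within {0..} \<noteq> bot"
proof -
  assume "t \<ge> 0"
  hence "{t<..} \<subseteq> {0..} - {t}" by auto
  hence "closure {t<..} \<subseteq> closure ({0..} - {t})" by (rule closure_mono)
  hence "t \<in> closure ({0..} - {t})" unfolding closure_greaterThan by blast
  thus ?thesis unfolding at_within_eq_bot_iff by blast
qed

lemma pdt_scale:
  assumes "t \<ge> 0" "sig differentiable (at t within {0..})"
  shows "pdt (\<lambda>s. sig s * y) t = pdt sig t * y"
proof -
  have nt: "at t within {0..} \<noteq> bot" using assms(1) by (rule at_nonneg_nontriv)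
  obtain D where D: "(sig has_real_derivative D) (at t within {0..})"
    using assms(2) real_differentiable_def by blast
  have "pdt sig t = D" unfolding pdt_def
    by (rule some_equality, rule D, erule has_field_derivative_unique[OF _ D nt])
  moreover have D2: "((\<lambda>s. sig s * y) has_real_derivative D * y) (at t within {0..})"
    using D by (rule DERIV_cmult_right)
  have "pdt (\<lambda>s. sig s * y) t = D * y" unfolding pdt_def
    by (rule some_equality, rule D2, erule has_field_derivative_unique[OF _ D2 nt])
  ultimately show ?thesis by simp
qed

lemma bracketG:
  assumes "sig t > 0" "y > 0" "\<mu> t differentiable (at y)" "t \<ge> 0" "sig differentiable (at t within {0..})"
  shows "drift_bracket (\<lambda>t x. sig t * x) \<mu> t y = pdt sig t / sig t - deriv (\<mu> t) y + \<mu> t y / y"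
proof -
  have d1: "deriv (\<lambda>z. sig t * z) z = sig t" for z
    by (rule DERIV_imp_deriv) (auto intro!: derivative_eq_intros)
  have m: "(\<mu> t has_real_derivative deriv (\<mu> t) y) (at y)"
    using assms(3) DERIV_deriv_iff_real_differentiable by blast
  have "((\<lambda>z. sig t / 2 - \<mu> t z / (sig t * z)) has_real_derivative
     0 - (deriv (\<mu> t) y * (sig t * y) - \<mu> t y * (sig t * 1)) / (sig t * y * (sig t * y))) (at y)"
    using assms by (auto intro!: derivative_eq_intros m)
  hence e: "deriv (\<lambda>z. sig t / 2 - \<mu> t z / (sig t * z)) y = 0 - (deriv (\<mu> t) y * (sig t * y) - \<mu> t y * (sig t * 1)) / (sig t * y * (sig t * y))"
    by (rule DERIV_imp_deriv)
  show ?thesis using assms unfolding drift_bracket_def d1 pdt_scale[OF assms(4,5)] e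
    by (simp add: field_simps power2_eq_square)
qed

lemma bracketL:
  assumes "sig t > 0" "\<mu> t differentiable (at y)"
  shows "drift_bracket (\<lambda>t x. sig t) \<mu> t y = pdt sig t / sig t - deriv (\<mu> t) y"
proof -
  have m: "(\<mu> t has_real_derivative deriv (\<mu> t) y) (at y)"
    using assms(2) DERIV_deriv_iff_real_differentiable by blast
  have "((\<lambda>z. 0 / 2 - \<mu> t z / sig t) has_real_derivative 0 - deriv (\<mu> t) y / sig t) (at y)"
    using assms by (auto intro!: derivative_eq_intros m)
  hence e: "deriv (\<lambda>z. 0 / 2 - \<mu> t z / sig t) y = 0 - deriv (\<mu> t) y / sig t"
    by (rule DERIV_imp_deriv)
  show ?thesis using assms unfolding drift_bracket_def deriv_const e
    by (simp add: field_simps)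
qed

lemma L_iff:
  assumes "sig t > 0" "\<forall>x. \<mu> t differentiable (at x)"
  shows "drift_pde (\<lambda>t x. sig t) \<mu> t x \<longleftrightarrow> (deriv (\<mu> t) has_real_derivative 0) (at x)"
proof -
  have e: "drift_bracket (\<lambda>t x. sig t) \<mu> t = (\<lambda>y. pdt sig t / sig t - deriv (\<mu> t) y)"
  proof (rule ext)
    fix y show "drift_bracket (\<lambda>t x. sig t) \<mu> t y = pdt sig t / sig t - deriv (\<mu> t) y"
      by (rule bracketL[where sig=sig and t=t and \<mu>=\<mu> and y=y]) (use assms in blast)+
  qed
  show ?thesis unfolding drift_pde_def e
  proof
    assume "((\<lambda>y. pdt sig t / sig t - deriv (\<mu> t) y) has_real_derivative 0) (at x)"
    from DERIV_diff[OF DERIV_const[of "pdt sig t / sig t"] this] show "(deriv (\<mu> t) has_real_derivative 0) (at x)" by simp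
  next
    assume "(deriv (\<mu> t) has_real_derivative 0) (at x)"
    from DERIV_diff[OF DERIV_const[of "pdt sig t / sig t"] this] show "((\<lambda>y. pdt sig t / sig t - deriv (\<mu> t) y) has_real_derivative 0) (at x)" by simp
  qed
qed

lemma L_solve:
  fixes f :: "real \<Rightarrow> real"
  assumes "\<forall>x. f differentiable (at x)" "\<forall>x. (deriv f has_real_derivative 0) (at x)"
  shows "f x = deriv f 0 * x + f 0"
proof -
  have c: "deriv f y = deriv f 0" for y using DERIV_isconst_all[OF assms(2)] by blast
  have "((\<lambda>x. f x - deriv f 0 * x) has_real_derivative 0) (at y)" for y
  proof -
    have "(f has_real_derivative deriv f y) (at y)"
      using assms(1) DERIV_deriv_iff_real_differentiable by blast
    hence "(f has_real_derivative deriv f 0) (at y)" using c[of y] by simp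
    thus ?thesis by (auto intro!: derivative_eq_intros)
  qed
  hence "\<forall>y. ((\<lambda>x. f x - deriv f 0 * x) has_real_derivative 0) (at y)" by blast
  from DERIV_isconst_all[OF this] have "f x - deriv f 0 * x = f 0 - deriv f 0 * 0" .
  thus ?thesis by simp
qed

lemma G_iff:
  assumes "sig t > 0" "t \<ge> 0" "sig differentiable (at t within {0..})"
    "\<forall>x>0. \<mu> t differentiable (at x)" "x > 0"
  shows "drift_pde (\<lambda>t x. sig t * x) \<mu> t x \<longleftrightarrow>
    ((\<lambda>y. \<mu> t y / y - deriv (\<mu> t) y) has_real_derivative 0) (at x)"
proof -
  have e: "drift_bracket (\<lambda>t x. sig t * x) \<mu> t y = pdt sig t / sig t + (\<mu> t y / y - deriv (\<mu> t) y)"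
    if "y \<in> {0<..}" for y
  proof -
    have y: "y > 0" using that by simp
    have "drift_bracket (\<lambda>t x. sig t * x) \<mu> t y = pdt sig t / sig t - deriv (\<mu> t) y + \<mu> t y / y"
      by (rule bracketG[where sig=sig and t=t and \<mu>=\<mu> and y=y]) (use assms y in blast)+
    thus ?thesis by simp
  qed
  show ?thesis unfolding drift_pde_def
  proof
    assume "(drift_bracket (\<lambda>t x. sig t * x) \<mu> t has_real_derivative 0) (at x)"
    hence "((\<lambda>y. pdt sig t / sig t + (\<mu> t y / y - deriv (\<mu> t) y)) has_real_derivative 0) (at x)"
      by (rule has_field_derivative_transform_within_open[where S="{0<..}"]) (use assms(5) e in \<open>simp_all\<close>)
    from DERIV_diff[OF this DERIV_const[of "pdt sig t / sig t"]]
    show "((\<lambda>y. \<mu> t y / y - deriv (\<mu> t) y) has_real_derivative 0) (at x)" by simp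
  next
    assume "((\<lambda>y. \<mu> t y / y - deriv (\<mu> t) y) has_real_derivative 0) (at x)"
    from DERIV_add[OF DERIV_const[of "pdt sig t / sig t"] this]
    have "((\<lambda>y. pdt sig t / sig t + (\<mu> t y / y - deriv (\<mu> t) y)) has_real_derivative 0) (at x)" by simp
    thus "(drift_bracket (\<lambda>t x. sig t * x) \<mu> t has_real_derivative 0) (at x)"
      by (rule has_field_derivative_transform_within_open[where S="{0<..}"]) (use assms(5) e in \<open>simp_all\<close>)
  qed
qed

lemma G_solve:
  fixes f :: "real \<Rightarrow> real"
  assumes d: "\<forall>x>0. f differentiable (at x)"
    and z: "\<forall>x>0. ((\<lambda>y. f y / y - deriv f y) has_real_derivative 0) (at x)"
    and "x > 0"
  shows "f x = f 1 * x + (deriv f 1 - f 1) * x * ln x"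
proof -
  obtain c where c: "\<forall>y\<in>{0<..}. f y / y - deriv f y = c"
  proof -
    have "\<exists>c. \<forall>y\<in>{0<..}. f y / y - deriv f y = c"
    proof (rule has_field_derivative_zero_constant)
      fix y :: real assume "y \<in> {0<..}"
      hence "((\<lambda>y. f y / y - deriv f y) has_real_derivative 0) (at y)" using z by simp
      thus "((\<lambda>y. f y / y - deriv f y) has_real_derivative 0) (at y within {0<..})"
        by (rule has_field_derivative_at_within)
    qed simp
    thus ?thesis using that by blast
  qed
  have c1: "c = f 1 - deriv f 1" using c[rule_format, of 1] by simp
  have g: "((\<lambda>y. f y / y + c * ln y) has_real_derivative 0) (at y within {0<..})" if "y \<in> {0<..}" for y
  proof -
    have y: "y > 0" using that by simp
    have fd: "(f has_real_derivative deriv f y) (at y)"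
      using d y DERIV_deriv_iff_real_differentiable by blast
    have dv: "deriv f y = f y / y - c" using c[rule_format, of y] y by simp
    have "((\<lambda>y. f y / y + c * ln y) has_real_derivative
        (deriv f y * y - f y * 1) / (y * y) + c * (1 / y)) (at y)"
      using y by (auto intro!: derivative_eq_intros fd)
    moreover have "(deriv f y * y - f y * 1) / (y * y) + c * (1 / y) = 0"
      using y unfolding dv by (simp add: field_simps)
    ultimately show ?thesis using has_field_derivative_at_within by metis
  qed
  obtain k where k: "\<forall>y\<in>{0<..}. f y / y + c * ln y = k"
  proof -
    have "\<exists>k. \<forall>y\<in>{0<..}. f y / y + c * ln y = k"
      by (rule has_field_derivative_zero_constant[OF _ g]) simp_all
    thus ?thesis using that by blast
  qed
  have k1: "k = f 1" using k[rule_format, of 1] by simp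
  have "f x / x + c * ln x = f 1" using k[rule_format, of x] k1 assms(3) by simp
  hence "f x = x * (f 1 - c * ln x)" using assms(3) by (simp add: field_simps)
  thus ?thesis unfolding c1 by (simp add: algebra_simps)
qed

lemma G_back:
  fixes f :: "real \<Rightarrow> real"
  assumes f: "\<forall>x>0. f x = a * x + b * x * ln x" and "x > 0"
  shows "((\<lambda>y. f y / y - deriv f y) has_real_derivative 0) (at x)"
proof -
  have dv: "deriv f y = a + b * (ln y + 1)" if y: "y > 0" for y
  proof -
    have "((\<lambda>x. a * x + b * x * ln x) has_real_derivative a * 1 + (b * 1 * ln y + b * y * (1 / y))) (at y)"
      using y by (auto intro!: derivative_eq_intros)
    hence "(f has_real_derivative a * 1 + (b * 1 * ln y + b * y * (1 / y))) (at y)"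
      by (rule has_field_derivative_transform_within_open[where S="{0<..}"]) (use y f in auto)
    hence "deriv f y = a * 1 + (b * 1 * ln y + b * y * (1 / y))" by (rule DERIV_imp_deriv)
    thus ?thesis using y by (simp add: algebra_simps)
  qed
  have "((\<lambda>y. - b) has_real_derivative 0) (at x)" by simp
  thus ?thesis
  proof (rule has_field_derivative_transform_within_open[where S="{0<..}"])
    fix y :: real assume "y \<in> {0<..}"
    hence y: "y > 0" by simp
    show "- b = f y / y - deriv f y" unfolding dv[OF y] using f y by (simp add: field_simps)
  qed (use assms in auto)
qed

theorem corollary6:
  fixes sig :: "real \<Rightarrow> real"
  assumes pos: "\<forall>t\<ge>0. sig t > 0"
    and diff: "\<forall>t\<ge>0. sig differentiable (at t within {0..})"
  shows
    "(\<forall>\<mu> :: real \<Rightarrow> real \<Rightarrow> real.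
        (\<forall>t\<ge>0. \<forall>x. \<mu> t differentiable (at x) \<and> deriv (\<mu> t) differentiable (at x)) \<longrightarrow>
        ((\<forall>t\<ge>0. \<forall>x. drift_pde (\<lambda>t x. sig t) \<mu> t x) \<longleftrightarrow>
         (\<exists>\<alpha> \<beta> :: real \<Rightarrow> real. \<forall>t\<ge>0. \<forall>x. \<mu> t x = \<alpha> t * x + \<beta> t)))
   \<and> (\<forall>\<mu> :: real \<Rightarrow> real \<Rightarrow> real.
        (\<forall>t\<ge>0. \<forall>x>0. \<mu> t differentiable (at x) \<and> deriv (\<mu> t) differentiable (at x)) \<longrightarrow>
        ((\<forall>t\<ge>0. \<forall>x>0. drift_pde (\<lambda>t x. sig t * x) \<mu> t x) \<longleftrightarrow>
         (\<exists>\<alpha> \<beta> :: real \<Rightarrow> real. \<forall>t\<ge>0. \<forall>x>0. \<mu> t x = \<alpha> t * x + \<beta> t * x * ln x)))"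
proof (intro conjI allI impI)
  fix \<mu> :: "real \<Rightarrow> real \<Rightarrow> real"
  assume H: "\<forall>t\<ge>0. \<forall>x. \<mu> t differentiable (at x) \<and> deriv (\<mu> t) differentiable (at x)"
  show "(\<forall>t\<ge>0. \<forall>x. drift_pde (\<lambda>t x. sig t) \<mu> t x) \<longleftrightarrow>
         (\<exists>\<alpha> \<beta> :: real \<Rightarrow> real. \<forall>t\<ge>0. \<forall>x. \<mu> t x = \<alpha> t * x + \<beta> t)"
  proof
    assume P: "\<forall>t\<ge>0. \<forall>x. drift_pde (\<lambda>t x. sig t) \<mu> t x"
    have "\<forall>t\<ge>0. \<forall>x. \<mu> t x = deriv (\<mu> t) 0 * x + \<mu> t 0"
    proof (intro allI impI)
      fix t x :: real assume t: "t \<ge> 0"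
      have d: "\<forall>x. \<mu> t differentiable (at x)" using H t by blast
      show "\<mu> t x = deriv (\<mu> t) 0 * x + \<mu> t 0"
        using L_solve[OF d] L_iff[where sig=sig and \<mu>=\<mu> and t=t, OF pos[rule_format, OF t] d] P t by blast
    qed
    thus "\<exists>\<alpha> \<beta> :: real \<Rightarrow> real. \<forall>t\<ge>0. \<forall>x. \<mu> t x = \<alpha> t * x + \<beta> t"
      by (intro exI[of _ "\<lambda>t. deriv (\<mu> t) 0"] exI[of _ "\<lambda>t. \<mu> t 0"])
  next
    assume "\<exists>\<alpha> \<beta> :: real \<Rightarrow> real. \<forall>t\<ge>0. \<forall>x. \<mu> t x = \<alpha> t * x + \<beta> t"
    then obtain \<alpha> \<beta> :: "real \<Rightarrow> real" where ab: "\<forall>t\<ge>0. \<forall>x. \<mu> t x = \<alpha> t * x + \<beta> t" by blast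
    show "\<forall>t\<ge>0. \<forall>x. drift_pde (\<lambda>t x. sig t) \<mu> t x"
    proof (intro allI impI)
      fix t x :: real assume t: "t \<ge> 0"
      have d: "\<forall>x. \<mu> t differentiable (at x)" using H t by blast
      have m: "\<mu> t = (\<lambda>x. \<alpha> t * x + \<beta> t)" using ab t by auto
      have "deriv (\<mu> t) y = \<alpha> t" for y unfolding m
        by (rule DERIV_imp_deriv) (auto intro!: derivative_eq_intros)
      hence "deriv (\<mu> t) = (\<lambda>_. \<alpha> t)" by auto
      hence "(deriv (\<mu> t) has_real_derivative 0) (at x)" by simp
      thus "drift_pde (\<lambda>t x. sig t) \<mu> t x" using L_iff[where sig=sig and \<mu>=\<mu> and t=t, OF pos[rule_format, OF t] d] by blast
    qed
  qed
next
  fix \<mu> :: "real \<Rightarrow> real \<Rightarrow> real"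
  assume H: "\<forall>t\<ge>0. \<forall>x>0. \<mu> t differentiable (at x) \<and> deriv (\<mu> t) differentiable (at x)"
  show "(\<forall>t\<ge>0. \<forall>x>0. drift_pde (\<lambda>t x. sig t * x) \<mu> t x) \<longleftrightarrow>
         (\<exists>\<alpha> \<beta> :: real \<Rightarrow> real. \<forall>t\<ge>0. \<forall>x>0. \<mu> t x = \<alpha> t * x + \<beta> t * x * ln x)"
  proof
    assume P: "\<forall>t\<ge>0. \<forall>x>0. drift_pde (\<lambda>t x. sig t * x) \<mu> t x"
    have "\<forall>t\<ge>0. \<forall>x>0. \<mu> t x = \<mu> t 1 * x + (deriv (\<mu> t) 1 - \<mu> t 1) * x * ln x"
    proof (intro allI impI)
      fix t x :: real assume t: "t \<ge> 0" and x: "x > 0"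
      have d: "\<forall>x>0. \<mu> t differentiable (at x)" using H t by blast
      have z: "\<forall>x>0. ((\<lambda>y. \<mu> t y / y - deriv (\<mu> t) y) has_real_derivative 0) (at x)"
        using G_iff[where sig=sig and \<mu>=\<mu> and t=t, OF pos[rule_format, OF t] t diff[rule_format, OF t] d] P t by blast
      show "\<mu> t x = \<mu> t 1 * x + (deriv (\<mu> t) 1 - \<mu> t 1) * x * ln x"
        by (rule G_solve[OF d z x])
    qed
    thus "\<exists>\<alpha> \<beta> :: real \<Rightarrow> real. \<forall>t\<ge>0. \<forall>x>0. \<mu> t x = \<alpha> t * x + \<beta> t * x * ln x"
      by (intro exI[of _ "\<lambda>t. \<mu> t 1"] exI[of _ "\<lambda>t. deriv (\<mu> t) 1 - \<mu> t 1"])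
  next
    assume "\<exists>\<alpha> \<beta> :: real \<Rightarrow> real. \<forall>t\<ge>0. \<forall>x>0. \<mu> t x = \<alpha> t * x + \<beta> t * x * ln x"
    then obtain \<alpha> \<beta> :: "real \<Rightarrow> real" where ab: "\<forall>t\<ge>0. \<forall>x>0. \<mu> t x = \<alpha> t * x + \<beta> t * x * ln x" by blast
    show "\<forall>t\<ge>0. \<forall>x>0. drift_pde (\<lambda>t x. sig t * x) \<mu> t x"
    proof (intro allI impI)
      fix t x :: real assume t: "t \<ge> 0" and x: "x > 0"
      have d: "\<forall>x>0. \<mu> t differentiable (at x)" using H t by blast
      have "\<forall>x>0. \<mu> t x = \<alpha> t * x + \<beta> t * x * ln x" using ab t by blast
      from G_back[OF this x]
      show "drift_pde (\<lambda>t x. sig t * x) \<mu> t x"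
        using G_iff[where sig=sig and \<mu>=\<mu> and t=t, OF pos[rule_format, OF t] t diff[rule_format, OF t] d x] by blast
    qed
  qed
qed

end
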